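(* Let $V$ be a reflexive Banach space, $1<p<\infty$, and let $g\in L^p_b(\mathbb R,V)$ be time regular, or space regular, or normal. Then $g$ is weakly normal.
   Context: $L^p_b(\mathbb R,V)$ has norm $\sup_{s}\|g\|_{L^p((s,s+1),V)}$. Time regular: for every $\varepsilon>0$ there is $g_\varepsilon\in C^k_b(\mathbb R,V)$ for all $k$ with $\|g-g_\varepsilon\|_{L^p_b(\mathbb R,V)}\le\varepsilon$. Space regular: for every $\varepsilon>0$ there are a finite-dimensional $V_\varepsilon\subset V$ and $g_\varepsilon\in L^p_b(\mathbb R,V_\varepsilon)$ with $\|g-g_\varepsilon\|_{L^p_b(\mathbb R,V)}\le\varepsilon$. Normal: $\sup_{t\in\mathbb R}\int_t^{t+\tau}\|g(s)\|_V^p\,ds\to0$ as $\tau\to0$. Weakly normal: for every $\varepsilon>0$ there exist $\tau=\tau(\varepsilon)>0$, a finite-dimensional subspace $V_\varepsilon\subset V$ and $g_\varepsilon\in L^p_b(\mathbb R,V_\varepsilon)$ such that $\sup_{t\in\mathbb R}\int_t^{t+\tau}\|g(s)-g_\varepsilon(s)\|_V^p\,ds\le\varepsilon$. *)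

theory Defs
  imports "HOL-Analysis.Analysis"
begin

definition reflexive_space :: "'a::banach itself \<Rightarrow> bool" where
  "reflexive_space _ \<longleftrightarrow>
     surj (\<lambda>x::'a. Blinfun (\<lambda>f::'a \<Rightarrow>\<^sub>L real. blinfun_apply f x))"

definition strongly_measurable :: "(real \<Rightarrow> 'a::real_normed_vector) \<Rightarrow> bool" where
  "strongly_measurable g \<longleftrightarrow>
     (\<exists>s :: nat \<Rightarrow> real \<Rightarrow> 'a. (\<forall>n. simple_function lborel (s n)) \<and>
        (AE x in lborel. (\<lambda>n. s n x) \<longlonglongrightarrow> g x))"

definition Lpb :: "real \<Rightarrow> (real \<Rightarrow> 'a::real_normed_vector) \<Rightarrow> bool" where
  "Lpb p g \<longleftrightarrow> strongly_measurable g \<and>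
     (SUP s. \<integral>\<^sup>+ t\<in>{s..s+1}. ennreal (norm (g t) powr p) \<partial>lborel) < \<infinity>"

definition Lpb_norm_le :: "real \<Rightarrow> (real \<Rightarrow> 'a::real_normed_vector) \<Rightarrow> real \<Rightarrow> bool" where
  "Lpb_norm_le p f \<epsilon> \<longleftrightarrow>
     (SUP s. \<integral>\<^sup>+ t\<in>{s..s+1}. ennreal (norm (f t) powr p) \<partial>lborel) \<le> ennreal (\<epsilon> powr p)"

definition Cb_infty :: "(real \<Rightarrow> 'a::real_normed_vector) \<Rightarrow> bool" where
  "Cb_infty h \<longleftrightarrow> (\<exists>D :: nat \<Rightarrow> real \<Rightarrow> 'a. D 0 = h \<and>
     (\<forall>k t. (D k has_vector_derivative D (Suc k) t) (at t)) \<and>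
     (\<forall>k. bounded (range (D k))))"

definition time_regular :: "real \<Rightarrow> (real \<Rightarrow> 'a::real_normed_vector) \<Rightarrow> bool" where
  "time_regular p g \<longleftrightarrow> (\<forall>\<epsilon>>0. \<exists>g\<epsilon>. Cb_infty g\<epsilon> \<and> Lpb_norm_le p (\<lambda>t. g t - g\<epsilon> t) \<epsilon>)"

definition space_regular :: "real \<Rightarrow> (real \<Rightarrow> 'a::real_normed_vector) \<Rightarrow> bool" where
  "space_regular p g \<longleftrightarrow> (\<forall>\<epsilon>>0. \<exists>B g\<epsilon>. finite B \<and> Lpb p g\<epsilon> \<and> range g\<epsilon> \<subseteq> span B \<and>
      Lpb_norm_le p (\<lambda>t. g t - g\<epsilon> t) \<epsilon>)"

definition normal :: "real \<Rightarrow> (real \<Rightarrow> 'a::real_normed_vector) \<Rightarrow> bool" where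
  "normal p g \<longleftrightarrow>
     ((\<lambda>\<tau>. SUP t. \<integral>\<^sup>+ s\<in>{t..t+\<tau>}. ennreal (norm (g s) powr p) \<partial>lborel) \<longlongrightarrow> 0) (at_right 0)"

definition weakly_normal :: "real \<Rightarrow> (real \<Rightarrow> 'a::real_normed_vector) \<Rightarrow> bool" where
  "weakly_normal p g \<longleftrightarrow> (\<forall>\<epsilon>>0. \<exists>\<tau>>0. \<exists>B g\<epsilon>. finite B \<and> Lpb p g\<epsilon> \<and> range g\<epsilon> \<subseteq> span B \<and>
      (\<forall>t. (\<integral>\<^sup>+ s\<in>{t..t+\<tau>}. ennreal (norm (g s - g\<epsilon> s) powr p) \<partial>lborel) \<le> ennreal \<epsilon>))"

end

theory Submission
  imports Defs
begin

lemma sm_norm_diff: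
  fixes g h :: "real \<Rightarrow> 'a::banach"
  assumes "strongly_measurable g" "continuous_on UNIV h"
  shows "\<exists>F. F \<in> borel_measurable lborel \<and> (AE x in lborel. F x = norm (g x - h x))"
proof -
  obtain s where s: "\<And>n. simple_function lborel (s n)"
      "AE x in lborel. (\<lambda>n. s n x) \<longlonglongrightarrow> g x"
    using assms(1) unfolding strongly_measurable_def by blast
  define f where "f n x = norm (s n x - h x)" for n x
  have fm: "f n \<in> borel_measurable lborel" for n
  proof (rule borel_measurable_iff_greater[THEN iffD2], intro allI)
    fix a
    have fin: "finite (range (s n))" using simple_functionD(1)[OF s(1)[of n]] by simp
    have eq: "{x \<in> space lborel. a < f n x} = (\<Union>c\<in>range (s n). (s n -` {c}) \<inter> {x. a < norm (c - h x)})"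
      by (auto simp: f_def)
    have "(s n -` {c}) \<inter> {x. a < norm (c - h x)} \<in> sets lborel" for c
    proof -
      have 1: "s n -` {c} \<in> sets lborel" using simple_functionD(2)[OF s(1)[of n], of "{c}"] by simp
      have "open {x. a < norm (c - h x)}"
        by (intro open_Collect_less continuous_intros continuous_on_subset[OF assms(2)]) auto
      then have 2: "{x. a < norm (c - h x)} \<in> sets lborel" by simp
      show ?thesis using 1 2 by auto
    qed
    then show "{x \<in> space lborel. a < f n x} \<in> sets lborel"
      unfolding eq by (intro sets.finite_UN fin) auto
  qed
  define F where "F x = lim (\<lambda>n. f n x)" for x
  have "F \<in> borel_measurable lborel" unfolding F_def
    by (rule borel_measurable_lim_metric) (rule fm)
  moreover have "AE x in lborel. F x = norm (g x - h x)"
    using s(2)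
  proof eventually_elim
    case (elim x)
    have "(\<lambda>n. f n x) \<longlonglongrightarrow> norm (g x - h x)"
      unfolding f_def by (intro tendsto_intros elim)
    then show ?case unfolding F_def by (rule limI)
  qed
  ultimately show ?thesis by blast
qed

lemma powr_sum_bound:
  fixes a b c p :: real
  assumes "0 \<le> a" "a \<le> b + c" "0 \<le> b" "0 \<le> c" "0 < p"
  shows "a powr p \<le> 2 powr p * b powr p + 2 powr p * c powr p"
proof -
  have "a \<le> 2 * max b c" using assms by auto
  then have "a powr p \<le> (2 * max b c) powr p"
    using assms by (intro powr_mono2) auto
  also have "\<dots> = 2 powr p * max b c powr p"
    using assms by (simp add: powr_mult)
  also have "max b c powr p \<le> b powr p + c powr p"
    by (cases "b \<le> c") (auto simp: max_def)
  finally show ?thesis by (simp add: algebra_simps)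
qed

lemma Lpb_zero:
  assumes "0 < p"
  shows "Lpb p (\<lambda>_::real. 0::'a::real_normed_vector)"
  unfolding Lpb_def strongly_measurable_def
proof (intro conjI)
  show "\<exists>s :: nat \<Rightarrow> real \<Rightarrow> 'a. (\<forall>n. simple_function lborel (s n)) \<and>
        (AE x in lborel. (\<lambda>n. s n x) \<longlonglongrightarrow> 0)"
    by (rule exI[of _ "\<lambda>_ _. 0"]) auto
  show "(SUP s. \<integral>\<^sup>+ t\<in>{s..s+1}. ennreal (norm (0::'a) powr p) \<partial>lborel) < \<infinity>"
    by simp
qed

lemma weakly_normal_zero:
  fixes g :: "real \<Rightarrow> 'a::real_normed_vector"
  assumes "0 < p"
    and "\<And>\<epsilon>. \<epsilon> > 0 \<Longrightarrow> \<exists>\<tau>>0. \<forall>t. (\<integral>\<^sup>+ s\<in>{t..t+\<tau>}. ennreal (norm (g s) powr p) \<partial>lborel) \<le> ennreal \<epsilon>"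
  shows "weakly_normal p g"
  unfolding weakly_normal_def
proof (intro allI impI)
  fix \<epsilon> :: real assume "\<epsilon> > 0"
  then obtain \<tau> where "\<tau> > 0" "\<forall>t. (\<integral>\<^sup>+ s\<in>{t..t+\<tau>}. ennreal (norm (g s) powr p) \<partial>lborel) \<le> ennreal \<epsilon>"
    using assms(2) by blast
  then show "\<exists>\<tau>>0. \<exists>B g\<epsilon>. finite B \<and> Lpb p g\<epsilon> \<and> range g\<epsilon> \<subseteq> span B \<and>
      (\<forall>t. (\<integral>\<^sup>+ s\<in>{t..t+\<tau>}. ennreal (norm (g s - g\<epsilon> s) powr p) \<partial>lborel) \<le> ennreal \<epsilon>)"
    using Lpb_zero[OF assms(1)]
    by (intro exI[of _ \<tau>] conjI exI[of _ "{}"] exI[of _ "\<lambda>_. 0"]) auto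
qed


lemma normal_case:
  fixes g :: "real \<Rightarrow> 'a::real_normed_vector"
  assumes "0 < p" "normal p g"
  shows "weakly_normal p g"
proof (rule weakly_normal_zero[OF assms(1)])
  fix \<epsilon> :: real assume e: "\<epsilon> > 0"
  have "\<forall>\<^sub>F \<tau> in at_right 0. (SUP t. \<integral>\<^sup>+ s\<in>{t..t+\<tau>}. ennreal (norm (g s) powr p) \<partial>lborel) < ennreal \<epsilon>"
    using assms(2) e unfolding normal_def by (intro order_tendstoD(2)) auto
  then obtain b :: real where b: "b > 0"
    "\<And>\<tau>. \<tau> > 0 \<Longrightarrow> \<tau> < b \<Longrightarrow> (SUP t. \<integral>\<^sup>+ s\<in>{t..t+\<tau>}. ennreal (norm (g s) powr p) \<partial>lborel) < ennreal \<epsilon>"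
    by (auto simp: eventually_at_right_field)
  show "\<exists>\<tau>>0. \<forall>t. (\<integral>\<^sup>+ s\<in>{t..t+\<tau>}. ennreal (norm (g s) powr p) \<partial>lborel) \<le> ennreal \<epsilon>"
  proof (intro exI[of _ "b/2"] conjI allI)
    fix t
    have "(\<integral>\<^sup>+ s\<in>{t..t+b/2}. ennreal (norm (g s) powr p) \<partial>lborel)
        \<le> (SUP t. \<integral>\<^sup>+ s\<in>{t..t+b/2}. ennreal (norm (g s) powr p) \<partial>lborel)"
      by (rule SUP_upper) auto
    also have "\<dots> < ennreal \<epsilon>" using b by auto
    finally show "(\<integral>\<^sup>+ s\<in>{t..t+b/2}. ennreal (norm (g s) powr p) \<partial>lborel) \<le> ennreal \<epsilon>" by simp
  qed (use b in auto)
qed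

lemma space_case:
  fixes g :: "real \<Rightarrow> 'a::real_normed_vector"
  assumes "0 < p" "space_regular p g"
  shows "weakly_normal p g"
  unfolding weakly_normal_def
proof (intro allI impI)
  fix \<epsilon> :: real assume e: "\<epsilon> > 0"
  define \<delta> where "\<delta> = \<epsilon> powr (1/p)"
  have d: "\<delta> > 0" using e by (simp add: \<delta>_def)
  have dp: "\<delta> powr p = \<epsilon>" using e assms(1) by (simp add: \<delta>_def powr_powr)
  obtain B g\<epsilon> where B: "finite B" "Lpb p g\<epsilon>" "range g\<epsilon> \<subseteq> span B"
    "Lpb_norm_le p (\<lambda>t. g t - g\<epsilon> t) \<delta>"
    using assms(2) d unfolding space_regular_def by blast
  have "\<forall>t. (\<integral>\<^sup>+ s\<in>{t..t+1}. ennreal (norm (g s - g\<epsilon> s) powr p) \<partial>lborel) \<le> ennreal \<epsilon>"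
  proof
    fix t
    have "(\<integral>\<^sup>+ s\<in>{t..t+1}. ennreal (norm (g s - g\<epsilon> s) powr p) \<partial>lborel)
        \<le> (SUP t. \<integral>\<^sup>+ s\<in>{t..t+1}. ennreal (norm (g s - g\<epsilon> s) powr p) \<partial>lborel)"
      by (rule SUP_upper) auto
    also have "\<dots> \<le> ennreal \<epsilon>" using B(4) dp unfolding Lpb_norm_le_def by simp
    finally show "(\<integral>\<^sup>+ s\<in>{t..t+1}. ennreal (norm (g s - g\<epsilon> s) powr p) \<partial>lborel) \<le> ennreal \<epsilon>" .
  qed
  then show "\<exists>\<tau>>0. \<exists>B g\<epsilon>. finite B \<and> Lpb p g\<epsilon> \<and> range g\<epsilon> \<subseteq> span B \<and>
      (\<forall>t. (\<integral>\<^sup>+ s\<in>{t..t+\<tau>}. ennreal (norm (g s - g\<epsilon> s) powr p) \<partial>lborel) \<le> ennreal \<epsilon>)"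
    using B by (intro exI[of _ 1] conjI exI[of _ B] exI[of _ g\<epsilon>]) auto
qed


lemma time_case:
  fixes g :: "real \<Rightarrow> 'a::banach"
  assumes p: "0 < p" and L: "Lpb p g" and T: "time_regular p g"
  shows "weakly_normal p g"
proof (rule weakly_normal_zero[OF p])
  fix \<epsilon> :: real assume e: "\<epsilon> > 0"
  define K :: real where "K = 2 powr p"
  have K: "K > 0" by (simp add: K_def)
  define \<delta> where "\<delta> = (\<epsilon> / (2 * K)) powr (1/p)"
  have d: "\<delta> > 0" using e K by (simp add: \<delta>_def)
  have dp: "\<delta> powr p = \<epsilon> / (2 * K)" using e K p by (simp add: \<delta>_def powr_powr)
  obtain h where h: "Cb_infty h" "Lpb_norm_le p (\<lambda>t. g t - h t) \<delta>"
    using T d unfolding time_regular_def by blast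
  obtain D where D: "D 0 = h" "\<And>k t. (D k has_vector_derivative D (Suc k) t) (at t)"
    "\<And>k. bounded (range (D k))"
    using h(1) unfolding Cb_infty_def by blast
  have hc: "continuous_on UNIV h"
    using D(1) D(2)[of 0] by (metis continuous_at_imp_continuous_on has_vector_derivative_continuous)
  obtain M where M: "\<And>x. norm (h x) \<le> M"
    using D(1) D(3)[of 0] unfolding bounded_iff by auto
  have M0: "0 \<le> M" using M[of 0] norm_ge_zero[of "h 0"] by linarith
  obtain F1 where F1: "F1 \<in> borel_measurable lborel" "AE x in lborel. F1 x = norm (g x - h x)"
    using sm_norm_diff[OF _ hc] L unfolding Lpb_def by blast
  obtain F0 where F0: "F0 \<in> borel_measurable lborel" "AE x in lborel. F0 x = norm (g x - (\<lambda>_. 0) x)"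
    using sm_norm_diff[OF _ continuous_on_const] L unfolding Lpb_def by blast
  define C where "C = K * (M + 1) powr p"
  have C: "C > 0" using K M0 by (simp add: C_def)
  define \<tau> where "\<tau> = min 1 (\<epsilon> / (2 * C))"
  have tau: "\<tau> > 0" "\<tau> \<le> 1" "C * \<tau> \<le> \<epsilon> / 2" using e C
    by (auto simp: \<tau>_def min_def field_simps)
  show "\<exists>\<tau>>0. \<forall>t. (\<integral>\<^sup>+ s\<in>{t..t+\<tau>}. ennreal (norm (g s) powr p) \<partial>lborel) \<le> ennreal \<epsilon>"
  proof (intro exI[of _ \<tau>] conjI allI tau(1))
    fix t
    let ?A = "{t..t+\<tau>}"
    let ?I = "indicator ?A :: real \<Rightarrow> ennreal"
    have "(\<integral>\<^sup>+ s\<in>?A. ennreal (norm (g s) powr p) \<partial>lborel)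
        \<le> (\<integral>\<^sup>+ s. ennreal (K * F1 s powr p) * ?I s + ennreal C * ?I s \<partial>lborel)"
    proof (rule nn_integral_mono_AE)
      show "AE s in lborel. ennreal (norm (g s) powr p) * ?I s
              \<le> ennreal (K * F1 s powr p) * ?I s + ennreal C * ?I s"
        using F0(2) F1(2)
      proof eventually_elim
        case (elim s)
        have "norm (g s) \<le> norm (g s - h s) + norm (h s)" using norm_triangle_ineq[of "g s - h s" "h s"] by simp
        then have "norm (g s) \<le> F1 s + (M + 1)" using M[of s] elim by simp
        then have "norm (g s) powr p \<le> K * F1 s powr p + K * (M + 1) powr p"
          unfolding K_def using elim M0 p by (intro powr_sum_bound) auto
        then have "ennreal (norm (g s) powr p) \<le> ennreal (K * F1 s powr p) + ennreal C"
          unfolding C_def using K elim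
          by (simp add: ennreal_plus[symmetric] del: ennreal_plus)
        then show ?case by (auto split: split_indicator)
      qed
    qed
    also have "\<dots> = (\<integral>\<^sup>+ s. ennreal (K * F1 s powr p) * ?I s \<partial>lborel) + ennreal C * emeasure lborel ?A"
      using F1(1) by (subst nn_integral_add) (auto simp: nn_integral_cmult_indicator)
    also have "ennreal C * emeasure lborel ?A = ennreal (C * \<tau>)"
      using tau C by (simp add: ennreal_mult)
    also have "(\<integral>\<^sup>+ s. ennreal (K * F1 s powr p) * ?I s \<partial>lborel)
        = ennreal K * (\<integral>\<^sup>+ s. ennreal (F1 s powr p) * ?I s \<partial>lborel)"
      using F1(1) K by (subst nn_integral_cmult[symmetric]) (auto simp: ennreal_mult mult.assoc)
    also have "(\<integral>\<^sup>+ s. ennreal (F1 s powr p) * ?I s \<partial>lborel)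
        \<le> (\<integral>\<^sup>+ s\<in>{t..t+1}. ennreal (F1 s powr p) \<partial>lborel)"
      using tau by (intro nn_integral_mono) (auto split: split_indicator)
    also have "\<dots> = (\<integral>\<^sup>+ s\<in>{t..t+1}. ennreal (norm (g s - h s) powr p) \<partial>lborel)"
      using F1(2) by (intro nn_integral_cong_AE) auto
    also have "\<dots> \<le> (SUP t. \<integral>\<^sup>+ s\<in>{t..t+1}. ennreal (norm (g s - h s) powr p) \<partial>lborel)"
      by (rule SUP_upper) auto
    also have "\<dots> \<le> ennreal (\<epsilon> / (2 * K))" using h(2) dp unfolding Lpb_norm_le_def by simp
    finally have "(\<integral>\<^sup>+ s\<in>?A. ennreal (norm (g s) powr p) \<partial>lborel)
        \<le> ennreal K * ennreal (\<epsilon> / (2 * K)) + ennreal (C * \<tau>)"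
      by (simp add: mult_left_mono)
    also have "\<dots> = ennreal (\<epsilon> / 2 + C * \<tau>)"
      using K e C tau by (simp add: ennreal_mult[symmetric] ennreal_plus)
    also have "\<dots> \<le> ennreal \<epsilon>" using tau by (intro ennreal_leI) auto
    finally show "(\<integral>\<^sup>+ s\<in>?A. ennreal (norm (g s) powr p) \<partial>lborel) \<le> ennreal \<epsilon>" .
  qed
qed

theorem proposition2p14:
  fixes g :: "real \<Rightarrow> 'a::banach" and p :: real
  assumes "reflexive_space TYPE('a)"
    and "1 < p"
    and "Lpb p g"
    and "time_regular p g \<or> space_regular p g \<or> normal p g"
  shows "weakly_normal p g"
proof -
  have p: "0 < p" using assms(2) by simp
  show ?thesis using assms(4) time_case[OF p assms(3)] space_case[OF p] normal_case[OF p] by blast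
qed

end
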